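(* Fix an environment $(\mathcal{S},\mathcal{A},\mathcal{T},d_0,\_,\gamma)$ and a set $\Pi$ of stationary policies containing a nonempty open subset of $\Pi^+$. Then every pair of reward functions $(\mathcal{R},\mathcal{R}')$ with $J_{\mathcal{R}},J_{\mathcal{R}'}$ both non-trivial on $\Pi$ and not equivalent on $\Pi$ is hackable relative to $\Pi$ and this environment.
   Context: Setting: finite $\mathcal{S}$, finite $\mathcal{A}$ with $|\mathcal{A}|>1$, transition model $\mathcal{T}:\mathcal{S}\times\mathcal{A}\to\Delta(\mathcal{S})$, $d_0\in\Delta(\mathcal{S})$, $\gamma\in[0,1)$, all states reachable; an environment is an MDP without its reward; rewards are $\mathcal{R}:\mathcal{S}\times\mathcal{A}\to\mathbb{R}$. Stationary policies are identified with $\Delta(\mathcal{A})^{|\mathcal{S}|}\subset\mathbb{R}^{\mathcal{S}\times\mathcal{A}}$; $\Pi^+$ is the set with $\pi(a\mid s)>0$ for all $s,a$, and "open" means open in $\Pi^+$. $J_{\mathcal{R}}(\pi)=\mathbb{E}\big[\sum_{t\ge0}\gamma^t\mathcal{R}(s_t,a_t)\big]$ with $s_0\sim d_0$, $a_t\sim\pi(\cdot\mid s_t)$, $s_{t+1}\sim\mathcal{T}(\cdot\mid s_t,a_t)$. $J$ is trivial on $\Pi$ if constant on $\Pi$; $J_1,J_2$ equivalent on $\Pi$ if for all $\pi,\pi'\in\Pi$, $J_1(\pi)\ge J_1(\pi')\iff J_2(\pi)\ge J_2(\pi')$. $(\mathcal{R},\mathcal{R}')$ is hackable relative to $\Pi$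 if there are $\pi,\pi'\in\Pi$ with $J_{\mathcal{R}}(\pi)>J_{\mathcal{R}}(\pi')$ and $J_{\mathcal{R}'}(\pi')>J_{\mathcal{R}'}(\pi)$. *)

theory Defs
  imports "HOL-Analysis.Analysis"
begin

text \<open>A transition model is T :: 's => 'a => 's => real (T s a s' = probability of s'),
  an initial distribution d0 :: 's => real, a discount factor gamma.
  Stationary policies are functions pi :: 's => 'a => real with pi s a = pi(a | s),
  i.e. elements of R^(S x A); the topology is the product (Euclidean) topology.\<close>

definition is_distr :: "('b::finite \<Rightarrow> real) \<Rightarrow> bool" where
  "is_distr p \<longleftrightarrow> (\<forall>x. p x \<ge> 0) \<and> (\<Sum>x\<in>UNIV. p x) = 1"

definition all_reachable ::
  "('s::finite \<Rightarrow> 'a::finite \<Rightarrow> 's \<Rightarrow> real) \<Rightarrow> ('s \<Rightarrow> real) \<Rightarrow> bool" where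
  "all_reachable T d0 \<longleftrightarrow>
     (\<forall>s. \<exists>s0. d0 s0 > 0 \<and> (s0, s) \<in> {(x, y). \<exists>a. T x a y > 0}\<^sup>*)"

definition environment ::
  "('s::finite \<Rightarrow> 'a::finite \<Rightarrow> 's \<Rightarrow> real) \<Rightarrow> ('s \<Rightarrow> real) \<Rightarrow> real \<Rightarrow> bool" where
  "environment T d0 \<gamma> \<longleftrightarrow>
     CARD('a) > 1 \<and> (\<forall>s a. is_distr (T s a)) \<and> is_distr d0 \<and>
     0 \<le> \<gamma> \<and> \<gamma> < 1 \<and> all_reachable T d0"

definition policies :: "('s::finite \<Rightarrow> 'a::finite \<Rightarrow> real) set" where
  "policies = {\<pi>. \<forall>s. is_distr (\<pi> s)}"

definition pos_policies :: "('s::finite \<Rightarrow> 'a::finite \<Rightarrow> real) set" where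
  "pos_policies = {\<pi>. \<pi> \<in> policies \<and> (\<forall>s a. \<pi> s a > 0)}"

fun state_dist ::
  "('s::finite \<Rightarrow> 'a::finite \<Rightarrow> 's \<Rightarrow> real) \<Rightarrow> ('s \<Rightarrow> real) \<Rightarrow> ('s \<Rightarrow> 'a \<Rightarrow> real)
     \<Rightarrow> nat \<Rightarrow> 's \<Rightarrow> real" where
  "state_dist T d0 \<pi> 0 s' = d0 s'"
| "state_dist T d0 \<pi> (Suc t) s' =
     (\<Sum>s\<in>UNIV. \<Sum>a\<in>UNIV. state_dist T d0 \<pi> t s * \<pi> s a * T s a s')"

definition J ::
  "('s::finite \<Rightarrow> 'a::finite \<Rightarrow> 's \<Rightarrow> real) \<Rightarrow> ('s \<Rightarrow> real) \<Rightarrow> real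
     \<Rightarrow> ('s \<Rightarrow> 'a \<Rightarrow> real) \<Rightarrow> ('s \<Rightarrow> 'a \<Rightarrow> real) \<Rightarrow> real" where
  "J T d0 \<gamma> R \<pi> =
     (\<Sum>t. \<gamma> ^ t * (\<Sum>s\<in>UNIV. \<Sum>a\<in>UNIV. state_dist T d0 \<pi> t s * \<pi> s a * R s a))"

definition trivial_on :: "('p \<Rightarrow> real) \<Rightarrow> 'p set \<Rightarrow> bool" where
  "trivial_on f P \<longleftrightarrow> (\<forall>p\<in>P. \<forall>q\<in>P. f p = f q)"

definition equivalent_on :: "('p \<Rightarrow> real) \<Rightarrow> ('p \<Rightarrow> real) \<Rightarrow> 'p set \<Rightarrow> bool" where
  "equivalent_on f g P \<longleftrightarrow> (\<forall>p\<in>P. \<forall>q\<in>P. f p \<ge> f q \<longleftrightarrow> g p \<ge> g q)"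

definition hackable ::
  "('s::finite \<Rightarrow> 'a::finite \<Rightarrow> 's \<Rightarrow> real) \<Rightarrow> ('s \<Rightarrow> real) \<Rightarrow> real
     \<Rightarrow> ('s \<Rightarrow> 'a \<Rightarrow> real) set \<Rightarrow> ('s \<Rightarrow> 'a \<Rightarrow> real) \<Rightarrow> ('s \<Rightarrow> 'a \<Rightarrow> real) \<Rightarrow> bool" where
  "hackable T d0 \<gamma> Pol R R' \<longleftrightarrow>
     (\<exists>\<pi>\<in>Pol. \<exists>\<pi>'\<in>Pol. J T d0 \<gamma> R \<pi> > J T d0 \<gamma> R \<pi>' \<and> J T d0 \<gamma> R' \<pi>' > J T d0 \<gamma> R' \<pi>)"

end

theory Submission imports Defs begin

lemma tendsto_fun1:
  fixes g :: "'x \<Rightarrow> 'i \<Rightarrow> 'b::topological_space"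
  assumes "\<And>i. ((\<lambda>x. g x i) \<longlongrightarrow> m i) F"
  shows "(g \<longlongrightarrow> m) F"
proof -
  have "limitin (product_topology (\<lambda>i. euclidean) UNIV) g m F"
    unfolding limitin_componentwise using assms by simp
  then show ?thesis by (simp add: euclidean_product_topology)
qed

lemma tendsto_fun2:
  fixes f :: "'x \<Rightarrow> 's \<Rightarrow> 'a \<Rightarrow> real"
  assumes "\<And>s a. ((\<lambda>x. f x s a) \<longlongrightarrow> l s a) F"
  shows "(f \<longlongrightarrow> l) F"
  by (intro tendsto_fun1 assms)

definition lin :: "('s \<Rightarrow> 'a \<Rightarrow> real) \<Rightarrow> ('s::finite \<Rightarrow> 'a::finite \<Rightarrow> real) \<Rightarrow> real" where
  "lin Q v = (\<Sum>s\<in>UNIV. \<Sum>a\<in>UNIV. v s a * Q s a)"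

lemma lin_comb: "lin Q (\<lambda>s a. c * u s a + d * z s a) = c * lin Q u + d * lin Q z"
  unfolding lin_def by (simp add: algebra_simps sum.distrib sum_distrib_left)

lemma lin_diff: "lin Q (\<lambda>s a. u s a - z s a) = lin Q u - lin Q z"
  unfolding lin_def by (simp add: left_diff_distrib sum_subtractf)

lemma core:
  fixes f g :: "('s \<Rightarrow> 'a \<Rightarrow> real) \<Rightarrow> real"
  assumes comb: "\<And>u z c d. u \<in> L \<Longrightarrow> z \<in> L \<Longrightarrow> (\<lambda>s a. c * u s a + d * z s a) \<in> L"
    and lf: "\<And>u z c d. f (\<lambda>s a. c * u s a + d * z s a) = c * f u + d * f z"
    and lg: "\<And>u z c d. g (\<lambda>s a. c * u s a + d * z s a) = c * g u + d * g z"
    and key: "\<And>v. v \<in> L \<Longrightarrow> \<not>(f v > 0 \<and> g v < 0) \<and> \<not>(f v < 0 \<and> g v > 0)"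
    and w: "w \<in> L" "f w \<noteq> 0" and z: "z \<in> L" "f z = 0" "g z \<noteq> 0"
  shows False
proof -
  define \<sigma> :: real where "\<sigma> = (if f w > 0 then -1 else 1)"
  define t where "t = (\<sigma> * (\<bar>g w\<bar> + 1) - g w) / g z"
  define v where "v = (\<lambda>s a. 1 * w s a + t * z s a)"
  have vL: "v \<in> L" unfolding v_def by (rule comb[OF w(1) z(1)])
  have fv: "f v = f w" unfolding v_def lf using z(2) by simp
  have "g v = g w + t * g z" unfolding v_def lg by simp
  also have "\<dots> = \<sigma> * (\<bar>g w\<bar> + 1)" unfolding t_def using z(3) by simp
  finally have gv: "g v = \<sigma> * (\<bar>g w\<bar> + 1)" .
  show False
  proof (cases "f w > 0")
    case True
    then have "f v > 0 \<and> g v < 0" using fv gv \<sigma>_def by (simp add: abs_ge_zero add_pos_nonneg)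
    then show False using key[OF vL] by blast
  next
    case False
    then have "f v < 0 \<and> g v > 0" using fv gv \<sigma>_def w(2) by (simp add: add_pos_nonneg)
    then show False using key[OF vL] by blast
  qed
qed

locale mdp =
  fixes T :: "'s::finite \<Rightarrow> 'a::finite \<Rightarrow> 's \<Rightarrow> real" and d0 :: "'s \<Rightarrow> real" and \<gamma> :: real
  assumes Tdist: "\<And>s a. is_distr (T s a)" and d0dist: "is_distr d0"
    and g0: "0 \<le> \<gamma>" and g1: "\<gamma> < 1"
begin

lemma T_nonneg: "T s a s' \<ge> 0" using Tdist[of s a] by (simp add: is_distr_def)
lemma T_sum: "(\<Sum>s'\<in>UNIV. T s a s') = 1" using Tdist[of s a] by (simp add: is_distr_def)
lemma pol_nonneg: "\<pi> \<in> policies \<Longrightarrow> \<pi> s a \<ge> 0" by (simp add: policies_def is_distr_def)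
lemma pol_sum: "\<pi> \<in> policies \<Longrightarrow> (\<Sum>a\<in>UNIV. \<pi> s a) = 1" by (simp add: policies_def is_distr_def)

lemma sd_nonneg: "\<pi> \<in> policies \<Longrightarrow> state_dist T d0 \<pi> t s \<ge> 0"
proof (induction t arbitrary: s)
  case 0 then show ?case using d0dist by (simp add: is_distr_def)
next
  case (Suc t) then show ?case
    by (simp add: sum_nonneg pol_nonneg T_nonneg)
qed

lemma sd_sum: "\<pi> \<in> policies \<Longrightarrow> (\<Sum>s\<in>UNIV. state_dist T d0 \<pi> t s) = 1"
proof (induction t)
  case 0 then show ?case using d0dist by (simp add: is_distr_def)
next
  case (Suc t)
  have "(\<Sum>s'\<in>UNIV. state_dist T d0 \<pi> (Suc t) s') =
     (\<Sum>s'\<in>UNIV. \<Sum>s\<in>UNIV. \<Sum>a\<in>UNIV. state_dist T d0 \<pi> t s * \<pi> s a * T s a s')"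
    by (simp only: state_dist.simps)
  also have "\<dots> = (\<Sum>s\<in>UNIV. \<Sum>s'\<in>UNIV. \<Sum>a\<in>UNIV. state_dist T d0 \<pi> t s * \<pi> s a * T s a s')"
    by (rule sum.swap)
  also have "\<dots> = (\<Sum>s\<in>UNIV. \<Sum>a\<in>UNIV. \<Sum>s'\<in>UNIV. state_dist T d0 \<pi> t s * \<pi> s a * T s a s')"
    by (rule sum.cong[OF refl], rule sum.swap)
  also have "\<dots> = (\<Sum>s\<in>UNIV. \<Sum>a\<in>UNIV. state_dist T d0 \<pi> t s * \<pi> s a * (\<Sum>s'\<in>UNIV. T s a s'))"
    by (simp only: sum_distrib_left)
  also have "\<dots> = (\<Sum>s\<in>UNIV. state_dist T d0 \<pi> t s * (\<Sum>a\<in>UNIV. \<pi> s a))"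
    by (simp only: T_sum mult_1_right sum_distrib_left)
  also have "\<dots> = (\<Sum>s\<in>UNIV. state_dist T d0 \<pi> t s)"
    by (simp only: pol_sum[OF Suc.prems] mult_1_right)
  finally show ?case using Suc by simp
qed

lemma sd_le1: "\<pi> \<in> policies \<Longrightarrow> state_dist T d0 \<pi> t s \<le> 1"
  using member_le_sum[of s UNIV "state_dist T d0 \<pi> t"] sd_nonneg sd_sum by auto

lemma summ: "\<pi> \<in> policies \<Longrightarrow> summable (\<lambda>t. \<gamma>^t * state_dist T d0 \<pi> t s)"
proof (rule summable_comparison_test[OF _ summable_geometric[of \<gamma>]])
  assume p: "\<pi> \<in> policies"
  show "\<exists>N. \<forall>n\<ge>N. norm (\<gamma> ^ n * state_dist T d0 \<pi> n s) \<le> \<gamma> ^ n"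
    using sd_nonneg[OF p] sd_le1[OF p] g0
    by (auto simp: abs_mult intro!: mult_left_le)
  show "norm \<gamma> < 1" using g0 g1 by simp
qed

definition mu where "mu \<pi> s = (\<Sum>t. \<gamma>^t * state_dist T d0 \<pi> t s)"
definition occ where "occ \<pi> s a = mu \<pi> s * \<pi> s a"

lemma mu_nonneg: "\<pi> \<in> policies \<Longrightarrow> mu \<pi> s \<ge> 0"
  unfolding mu_def using summ sd_nonneg g0 by (auto intro!: suminf_nonneg)

lemma suminf_swap:
  assumes p: "\<pi> \<in> policies"
  shows "(\<Sum>n. \<Sum>s\<in>UNIV. \<Sum>a\<in>UNIV. (\<gamma>^n * state_dist T d0 \<pi> n s) * c s a) = (\<Sum>s\<in>UNIV. \<Sum>a\<in>UNIV. mu \<pi> s * c s a)"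
proof -
  have "(\<Sum>n. \<Sum>s\<in>UNIV. \<Sum>a\<in>UNIV. (\<gamma>^n * state_dist T d0 \<pi> n s) * c s a) =
     (\<Sum>s\<in>UNIV. \<Sum>n. \<Sum>a\<in>UNIV. (\<gamma>^n * state_dist T d0 \<pi> n s) * c s a)"
    by (rule suminf_sum) (auto intro!: summable_sum summable_mult2 summ p)
  also have "\<dots> = (\<Sum>s\<in>UNIV. \<Sum>a\<in>UNIV. \<Sum>n. (\<gamma>^n * state_dist T d0 \<pi> n s) * c s a)"
    by (rule sum.cong[OF refl], rule suminf_sum) (auto intro!: summable_mult2 summ p)
  also have "\<dots> = (\<Sum>s\<in>UNIV. \<Sum>a\<in>UNIV. mu \<pi> s * c s a)"
    unfolding mu_def by (rule sum.cong[OF refl], rule sum.cong[OF refl], rule suminf_mult2[symmetric], rule summ[OF p])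
  finally show ?thesis .
qed

lemma J_occ: "\<pi> \<in> policies \<Longrightarrow> J T d0 \<gamma> R \<pi> = (\<Sum>s\<in>UNIV. \<Sum>a\<in>UNIV. occ \<pi> s a * R s a)"
  unfolding J_def occ_def
  using suminf_swap[of \<pi> "\<lambda>s a. \<pi> s a * R s a"]
  by (simp add: sum_distrib_left mult.assoc)

lemma flow: assumes p: "\<pi> \<in> policies"
  shows "mu \<pi> s' = d0 s' + \<gamma> * (\<Sum>s\<in>UNIV. \<Sum>a\<in>UNIV. mu \<pi> s * \<pi> s a * T s a s')"
proof -
  let ?f = "\<lambda>t. \<gamma>^t * state_dist T d0 \<pi> t s'"
  have "mu \<pi> s' = ?f 0 + (\<Sum>n. ?f (Suc n))"
    unfolding mu_def using suminf_split_head[OF summ[OF p, of s']] by simp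
  also have "(\<Sum>n. ?f (Suc n)) = (\<Sum>n. \<gamma> * (\<Sum>s\<in>UNIV. \<Sum>a\<in>UNIV. (\<gamma>^n * state_dist T d0 \<pi> n s) * (\<pi> s a * T s a s')))"
    by (simp add: sum_distrib_left mult.assoc mult.left_commute)
  also have "\<dots> = \<gamma> * (\<Sum>n. (\<Sum>s\<in>UNIV. \<Sum>a\<in>UNIV. (\<gamma>^n * state_dist T d0 \<pi> n s) * (\<pi> s a * T s a s')))"
    by (rule suminf_mult) (auto intro!: summable_sum summable_mult2 summ p)
  also have "\<dots> = \<gamma> * (\<Sum>s\<in>UNIV. \<Sum>a\<in>UNIV. mu \<pi> s * \<pi> s a * T s a s')"
    using suminf_swap[OF p, of "\<lambda>s a. \<pi> s a * T s a s'"] by (simp add: mult.assoc)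
  finally show ?thesis by simp
qed


lemma uniq:
  assumes p: "\<pi> \<in> policies"
    and x: "\<And>s'. x s' = d0 s' + \<gamma> * (\<Sum>s\<in>UNIV. \<Sum>a\<in>UNIV. x s * \<pi> s a * T s a s')"
  shows "x = mu \<pi>"
proof -
  define \<delta> where "\<delta> s = x s - mu \<pi> s" for s
  have d: "\<delta> s' = \<gamma> * (\<Sum>s\<in>UNIV. \<Sum>a\<in>UNIV. \<delta> s * \<pi> s a * T s a s')" for s'
  proof -
    have "(\<Sum>s\<in>UNIV. \<Sum>a\<in>UNIV. (x s - mu \<pi> s) * \<pi> s a * T s a s') =
      (\<Sum>s\<in>UNIV. \<Sum>a\<in>UNIV. x s * \<pi> s a * T s a s') - (\<Sum>s\<in>UNIV. \<Sum>a\<in>UNIV. mu \<pi> s * \<pi> s a * T s a s')"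
      by (simp only: left_diff_distrib sum_subtractf)
    then show ?thesis unfolding \<delta>_def using x[of s'] flow[OF p, of s'] by (simp add: right_diff_distrib)
  qed
  have "\<bar>\<delta> s'\<bar> \<le> \<gamma> * (\<Sum>s\<in>UNIV. \<Sum>a\<in>UNIV. \<bar>\<delta> s\<bar> * \<pi> s a * T s a s')" for s'
  proof -
    have "\<bar>\<delta> s'\<bar> = \<gamma> * \<bar>\<Sum>s\<in>UNIV. \<Sum>a\<in>UNIV. \<delta> s * \<pi> s a * T s a s'\<bar>"
      using d[of s'] g0 by (simp add: abs_mult)
    also have "\<bar>\<Sum>s\<in>UNIV. \<Sum>a\<in>UNIV. \<delta> s * \<pi> s a * T s a s'\<bar> \<le> (\<Sum>s\<in>UNIV. \<Sum>a\<in>UNIV. \<bar>\<delta> s * \<pi> s a * T s a s'\<bar>)"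
      by (rule order_trans[OF sum_abs], rule sum_mono, rule sum_abs)
    also have "\<dots> = (\<Sum>s\<in>UNIV. \<Sum>a\<in>UNIV. \<bar>\<delta> s\<bar> * \<pi> s a * T s a s')"
      using pol_nonneg[OF p] T_nonneg by (simp add: abs_mult)
    finally show ?thesis using g0 by (simp add: mult_left_mono)
  qed
  then have "(\<Sum>s'\<in>UNIV. \<bar>\<delta> s'\<bar>) \<le> (\<Sum>s'\<in>UNIV. \<gamma> * (\<Sum>s\<in>UNIV. \<Sum>a\<in>UNIV. \<bar>\<delta> s\<bar> * \<pi> s a * T s a s'))"
    by (rule sum_mono)
  also have "\<dots> = \<gamma> * (\<Sum>s'\<in>UNIV. \<Sum>s\<in>UNIV. \<Sum>a\<in>UNIV. \<bar>\<delta> s\<bar> * \<pi> s a * T s a s')"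
    by (simp add: sum_distrib_left)
  also have "(\<Sum>s'\<in>UNIV. \<Sum>s\<in>UNIV. \<Sum>a\<in>UNIV. \<bar>\<delta> s\<bar> * \<pi> s a * T s a s') = (\<Sum>s\<in>UNIV. \<bar>\<delta> s\<bar>)"
  proof -
    have "(\<Sum>s'\<in>UNIV. \<Sum>s\<in>UNIV. \<Sum>a\<in>UNIV. \<bar>\<delta> s\<bar> * \<pi> s a * T s a s') = (\<Sum>s\<in>UNIV. \<Sum>s'\<in>UNIV. \<Sum>a\<in>UNIV. \<bar>\<delta> s\<bar> * \<pi> s a * T s a s')"
      by (rule sum.swap)
    also have "\<dots> = (\<Sum>s\<in>UNIV. \<Sum>a\<in>UNIV. \<Sum>s'\<in>UNIV. \<bar>\<delta> s\<bar> * \<pi> s a * T s a s')"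
      by (rule sum.cong[OF refl], rule sum.swap)
    also have "\<dots> = (\<Sum>s\<in>UNIV. \<Sum>a\<in>UNIV. \<bar>\<delta> s\<bar> * \<pi> s a * (\<Sum>s'\<in>UNIV. T s a s'))"
      by (simp only: sum_distrib_left)
    also have "\<dots> = (\<Sum>s\<in>UNIV. \<bar>\<delta> s\<bar> * (\<Sum>a\<in>UNIV. \<pi> s a))"
      by (simp only: T_sum mult_1_right sum_distrib_left)
    also have "\<dots> = (\<Sum>s\<in>UNIV. \<bar>\<delta> s\<bar>)"
      by (simp only: pol_sum[OF p] mult_1_right)
    finally show ?thesis .
  qed
  finally have "(1 - \<gamma>) * (\<Sum>s'\<in>UNIV. \<bar>\<delta> s'\<bar>) \<le> 0" by (simp add: algebra_simps)
  moreover have "(\<Sum>s'\<in>UNIV. \<bar>\<delta> s'\<bar>) \<ge> 0" by (simp add: sum_nonneg)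
  moreover have "1 - \<gamma> > 0" using g1 by simp
  ultimately have "(\<Sum>s'\<in>UNIV. \<bar>\<delta> s'\<bar>) = 0"
    by (simp add: mult_le_0_iff)
  then have "\<forall>s\<in>UNIV. \<bar>\<delta> s\<bar> = 0"
    using sum_nonneg_eq_0_iff[of UNIV "\<lambda>s. \<bar>\<delta> s\<bar>"] by simp
  then have "x s - mu \<pi> s = 0" for s unfolding \<delta>_def by (metis UNIV_I abs_eq_0)
  then have "x s = mu \<pi> s" for s by (simp only: right_minus_eq)
  then show ?thesis by (rule ext)
qed

lemma support:
  assumes p: "\<pi> \<in> policies" and p0: "\<pi>0 \<in> pos_policies"
  shows "state_dist T d0 \<pi> t s > 0 \<Longrightarrow> state_dist T d0 \<pi>0 t s > 0"
proof (induction t arbitrary: s)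
  case 0 then show ?case by simp
next
  case (Suc t)
  have p0': "\<pi>0 \<in> policies" "\<And>s a. \<pi>0 s a > 0" using p0 by (auto simp: pos_policies_def)
  have "\<exists>s1 a1. state_dist T d0 \<pi> t s1 * \<pi> s1 a1 * T s1 a1 s > 0"
  proof (rule ccontr)
    assume "\<not> ?thesis"
    then have "\<forall>s1 a1. state_dist T d0 \<pi> t s1 * \<pi> s1 a1 * T s1 a1 s \<le> 0" by (meson not_le)
    then have "state_dist T d0 \<pi> (Suc t) s \<le> 0" by (simp add: sum_nonpos)
    then show False using Suc.prems by simp
  qed
  then obtain s1 a1 where pos: "state_dist T d0 \<pi> t s1 * \<pi> s1 a1 * T s1 a1 s > 0" by blast
  have "state_dist T d0 \<pi> t s1 \<noteq> 0" "T s1 a1 s \<noteq> 0" using pos by auto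
  then have "state_dist T d0 \<pi> t s1 > 0" "T s1 a1 s > 0"
    using sd_nonneg[OF p, of t s1] T_nonneg[of s1 a1 s] by (simp_all add: order_less_le)
  with Suc.IH have "state_dist T d0 \<pi>0 t s1 * \<pi>0 s1 a1 * T s1 a1 s > 0" using p0' by simp
  moreover have nn: "\<forall>s' a. state_dist T d0 \<pi>0 t s' * \<pi>0 s' a * T s' a s \<ge> 0"
    using sd_nonneg[OF p0'(1)] pol_nonneg[OF p0'(1)] T_nonneg by simp
  ultimately have "(\<Sum>a\<in>UNIV. state_dist T d0 \<pi>0 t s1 * \<pi>0 s1 a * T s1 a s) > 0"
    by (intro sum_pos2[of UNIV a1]) auto
  then have "(\<Sum>s'\<in>UNIV. \<Sum>a\<in>UNIV. state_dist T d0 \<pi>0 t s' * \<pi>0 s' a * T s' a s) > 0"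
    using nn by (intro sum_pos2[of UNIV s1]) (auto intro: sum_nonneg)
  then show ?case by simp
qed

lemma mu_zero:
  assumes p: "\<pi> \<in> policies" and p0: "\<pi>0 \<in> pos_policies" and z: "mu \<pi>0 s = 0"
  shows "mu \<pi> s = 0"
proof -
  have p0': "\<pi>0 \<in> policies" using p0 by (auto simp: pos_policies_def)
  have "\<forall>n. \<gamma>^n * state_dist T d0 \<pi>0 n s = 0"
    using z unfolding mu_def
    using suminf_eq_zero_iff[OF summ[OF p0'], of s] sd_nonneg[OF p0'] g0 by simp
  then have "\<gamma>^n * state_dist T d0 \<pi> n s = 0" for n
    using support[OF p p0, of n s] sd_nonneg[OF p, of n s]
    by (metis mult_eq_0_iff order_less_le)
  then have "(\<lambda>n. \<gamma>^n * state_dist T d0 \<pi> n s) = (\<lambda>n. 0)" by (rule ext)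
  then have "mu \<pi> s = (\<Sum>n. (0::real))" unfolding mu_def by (rule arg_cong)
  then show ?thesis by simp
qed


lemma mu_occ_sum: "\<pi> \<in> policies \<Longrightarrow> (\<Sum>a\<in>UNIV. occ \<pi> s a) = mu \<pi> s"
  unfolding occ_def by (simp add: sum_distrib_left[symmetric] pol_sum)

lemma perturb:
  assumes p0: "\<pi>0 \<in> pos_policies"
    and Lv: "\<And>s'. (\<Sum>a\<in>UNIV. v s' a) = \<gamma> * (\<Sum>s\<in>UNIV. \<Sum>a\<in>UNIV. v s a * T s a s')"
    and Zv: "\<And>s a. mu \<pi>0 s = 0 \<Longrightarrow> v s a = 0"
  shows "\<exists>p. (p \<longlongrightarrow> \<pi>0) (at_right 0) \<and>
     eventually (\<lambda>\<epsilon>. p \<epsilon> \<in> pos_policies \<and> occ (p \<epsilon>) = (\<lambda>s a. occ \<pi>0 s a + \<epsilon> * v s a)) (at_right 0)"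
proof -
  have p0': "\<pi>0 \<in> policies" "\<And>s a. \<pi>0 s a > 0" using p0 by (auto simp: pos_policies_def)
  define m where "m s = mu \<pi>0 s" for s
  define e where "e \<epsilon> s a = occ \<pi>0 s a + \<epsilon> * v s a" for \<epsilon> :: real and s a
  define me where "me \<epsilon> s = (\<Sum>a\<in>UNIV. e \<epsilon> s a)" for \<epsilon> s
  define p where "p \<epsilon> s a = (if m s = 0 then \<pi>0 s a else e \<epsilon> s a / me \<epsilon> s)" for \<epsilon> s a
  have m_nn: "m s \<ge> 0" for s unfolding m_def using mu_nonneg[OF p0'(1)] .
  have occ0: "occ \<pi>0 s a = m s * \<pi>0 s a" for s a unfolding occ_def m_def ..
  have msum: "(\<Sum>a\<in>UNIV. occ \<pi>0 s a) = m s" for s unfolding m_def by (rule mu_occ_sum[OF p0'(1)])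
  have te: "((\<lambda>\<epsilon>. e \<epsilon> s a) \<longlongrightarrow> occ \<pi>0 s a) (at_right 0)" for s a
  proof -
    have "((\<lambda>\<epsilon>. occ \<pi>0 s a + \<epsilon> * v s a) \<longlongrightarrow> occ \<pi>0 s a + 0 * v s a) (at_right 0)"
      by (intro tendsto_intros)
    then show ?thesis unfolding e_def by simp
  qed
  have tme: "((\<lambda>\<epsilon>. me \<epsilon> s) \<longlongrightarrow> m s) (at_right 0)" for s
    unfolding me_def msum[symmetric] by (intro tendsto_sum te)
  have tp: "(p \<longlongrightarrow> \<pi>0) (at_right 0)"
  proof (rule tendsto_fun2)
    fix s a
    show "((\<lambda>\<epsilon>. p \<epsilon> s a) \<longlongrightarrow> \<pi>0 s a) (at_right 0)"
    proof (cases "m s = 0")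
      case True then show ?thesis unfolding p_def by simp
    next
      case False
      have "((\<lambda>\<epsilon>. e \<epsilon> s a / me \<epsilon> s) \<longlongrightarrow> occ \<pi>0 s a / m s) (at_right 0)"
        using False by (intro tendsto_divide te tme)
      then show ?thesis using False unfolding p_def occ0 by simp
    qed
  qed
  have ev: "eventually (\<lambda>\<epsilon>. \<forall>s. m s \<noteq> 0 \<longrightarrow> (\<forall>a. e \<epsilon> s a > 0) \<and> me \<epsilon> s > 0) (at_right 0)"
  proof (intro eventually_all_finite allI)
    fix s
    show "eventually (\<lambda>\<epsilon>. m s \<noteq> 0 \<longrightarrow> (\<forall>a. e \<epsilon> s a > 0) \<and> me \<epsilon> s > 0) (at_right 0)"
    proof (cases "m s = 0")
      case True then show ?thesis by simp
    next
      case False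
      then have mpos: "m s > 0" using m_nn[of s] by simp
      have "eventually (\<lambda>\<epsilon>. \<forall>a. e \<epsilon> s a > 0) (at_right 0)"
      proof (intro eventually_all_finite allI)
        fix a
        have "occ \<pi>0 s a > 0" unfolding occ0 using mpos p0'(2) by simp
        then show "eventually (\<lambda>\<epsilon>. e \<epsilon> s a > 0) (at_right 0)"
          by (rule order_tendstoD(1)[OF te])
      qed
      moreover have "eventually (\<lambda>\<epsilon>. me \<epsilon> s > 0) (at_right 0)"
        by (rule order_tendstoD(1)[OF tme mpos])
      ultimately show ?thesis by eventually_elim simp
    qed
  qed
  have good: "p \<epsilon> \<in> pos_policies \<and> occ (p \<epsilon>) = (\<lambda>s a. occ \<pi>0 s a + \<epsilon> * v s a)"
    if G: "\<forall>s. m s \<noteq> 0 \<longrightarrow> (\<forall>a. e \<epsilon> s a > 0) \<and> me \<epsilon> s > 0" for \<epsilon>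
  proof -
    have ppos: "p \<epsilon> s a > 0" for s a
      using G p0'(2) unfolding p_def by (auto intro: divide_pos_pos)
    have psum: "(\<Sum>a\<in>UNIV. p \<epsilon> s a) = 1" for s
    proof (cases "m s = 0")
      case True then show ?thesis unfolding p_def using pol_sum[OF p0'(1)] by simp
    next
      case False
      then have "me \<epsilon> s > 0" using G by blast
      then show ?thesis unfolding p_def using False
        by (simp add: sum_divide_distrib[symmetric] me_def)
    qed
    have ppol: "p \<epsilon> \<in> policies"
      unfolding policies_def is_distr_def using ppos psum by (auto intro: less_imp_le)
    have ppos': "p \<epsilon> \<in> pos_policies" unfolding pos_policies_def using ppol ppos by auto
    have ekey: "e \<epsilon> s a = me \<epsilon> s * p \<epsilon> s a" for s a
    proof (cases "m s = 0")
      case True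
      then have z: "e \<epsilon> s a' = 0" for a' unfolding e_def occ0 using Zv[of s a'] m_def by simp
      then have "me \<epsilon> s = 0" unfolding me_def by simp
      then show ?thesis using z by simp
    next
      case False
      then have "me \<epsilon> s > 0" using G by blast
      then show ?thesis unfolding p_def using False by simp
    qed
    have mflow: "me \<epsilon> s' = d0 s' + \<gamma> * (\<Sum>s\<in>UNIV. \<Sum>a\<in>UNIV. me \<epsilon> s * p \<epsilon> s a * T s a s')" for s'
    proof -
      have "me \<epsilon> s' = m s' + \<epsilon> * (\<Sum>a\<in>UNIV. v s' a)"
        unfolding me_def e_def by (simp add: sum.distrib sum_distrib_left msum)
      also have "m s' = d0 s' + \<gamma> * (\<Sum>s\<in>UNIV. \<Sum>a\<in>UNIV. occ \<pi>0 s a * T s a s')"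
        unfolding m_def occ_def by (rule flow[OF p0'(1)])
      finally have "me \<epsilon> s' = d0 s' + \<gamma> * ((\<Sum>s\<in>UNIV. \<Sum>a\<in>UNIV. occ \<pi>0 s a * T s a s') +
          \<epsilon> * (\<Sum>s\<in>UNIV. \<Sum>a\<in>UNIV. v s a * T s a s'))"
        using Lv[of s'] by (simp add: algebra_simps)
      also have "(\<Sum>s\<in>UNIV. \<Sum>a\<in>UNIV. occ \<pi>0 s a * T s a s') + \<epsilon> * (\<Sum>s\<in>UNIV. \<Sum>a\<in>UNIV. v s a * T s a s')
          = (\<Sum>s\<in>UNIV. \<Sum>a\<in>UNIV. e \<epsilon> s a * T s a s')"
        unfolding e_def by (simp add: sum.distrib sum_distrib_left algebra_simps)
      finally show ?thesis by (simp add: ekey)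
    qed
    have "me \<epsilon> = mu (p \<epsilon>)" by (rule uniq[OF ppol mflow])
    then have "occ (p \<epsilon>) = e \<epsilon>"
      by (intro ext) (simp add: occ_def ekey)
    then show ?thesis using ppos' unfolding e_def by simp
  qed
  show ?thesis
    by (rule exI[of _ p], intro conjI tp) (rule eventually_mono[OF ev good])
qed

end

theorem mainTheorem13:
  fixes T :: "'s::finite \<Rightarrow> 'a::finite \<Rightarrow> 's \<Rightarrow> real"
    and d0 :: "'s \<Rightarrow> real" and \<gamma> :: real
    and Pol :: "('s \<Rightarrow> 'a \<Rightarrow> real) set"
    and R R' :: "'s \<Rightarrow> 'a \<Rightarrow> real"
  assumes env: "environment T d0 \<gamma>"
    and stat: "Pol \<subseteq> policies"
    and open_sub: "\<exists>U. U \<noteq> {} \<and> U \<subseteq> Pol \<and> openin (top_of_set pos_policies) U"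
    and nontriv1: "\<not> trivial_on (J T d0 \<gamma> R) Pol"
    and nontriv2: "\<not> trivial_on (J T d0 \<gamma> R') Pol"
    and noneq: "\<not> equivalent_on (J T d0 \<gamma> R) (J T d0 \<gamma> R') Pol"
  shows "hackable T d0 \<gamma> Pol R R'"
proof (rule ccontr)
  assume nh: "\<not> hackable T d0 \<gamma> Pol R R'"
  interpret mdp T d0 \<gamma> using env by unfold_locales (auto simp: environment_def)
  obtain U where U: "U \<noteq> {}" "U \<subseteq> Pol" "openin (top_of_set pos_policies) U" using open_sub by blast
  obtain S where S: "open S" "U = pos_policies \<inter> S" using U(3) by (auto simp: openin_open)
  obtain \<pi>0 where \<pi>0: "\<pi>0 \<in> U" using U(1) by blast
  have p0: "\<pi>0 \<in> pos_policies" "\<pi>0 \<in> S" using \<pi>0 S by auto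
  have p0pol: "\<pi>0 \<in> policies" using p0 by (auto simp: pos_policies_def)
  define L0 where "L0 = {v. (\<forall>s'. (\<Sum>a\<in>UNIV. v s' a) = \<gamma> * (\<Sum>s\<in>UNIV. \<Sum>a\<in>UNIV. v s a * T s a s')) \<and>
      (\<forall>s a. mu \<pi>0 s = 0 \<longrightarrow> v s a = 0)}"
  have Jlin: "J T d0 \<gamma> Q \<pi> = lin Q (occ \<pi>)" if "\<pi> \<in> policies" for \<pi> Q
    unfolding lin_def using J_occ[OF that] .
  have diffL0: "(\<lambda>s a. occ \<pi> s a - occ \<pi>' s a) \<in> L0" if "\<pi> \<in> policies" "\<pi>' \<in> policies" for \<pi> \<pi>'
  proof -
    have "(\<Sum>a\<in>UNIV. occ \<pi> s' a - occ \<pi>' s' a) = \<gamma> * (\<Sum>s\<in>UNIV. \<Sum>a\<in>UNIV. (occ \<pi> s a - occ \<pi>' s a) * T s a s')" for s'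
    proof -
      have "(\<Sum>a\<in>UNIV. occ \<pi> s' a - occ \<pi>' s' a) = mu \<pi> s' - mu \<pi>' s'"
        by (simp add: sum_subtractf mu_occ_sum that)
      also have "\<dots> = \<gamma> * (\<Sum>s\<in>UNIV. \<Sum>a\<in>UNIV. occ \<pi> s a * T s a s') - \<gamma> * (\<Sum>s\<in>UNIV. \<Sum>a\<in>UNIV. occ \<pi>' s a * T s a s')"
        using flow[OF that(1), of s'] flow[OF that(2), of s'] unfolding occ_def by simp
      also have "\<dots> = \<gamma> * (\<Sum>s\<in>UNIV. \<Sum>a\<in>UNIV. (occ \<pi> s a - occ \<pi>' s a) * T s a s')"
        by (simp add: right_diff_distrib left_diff_distrib sum_subtractf)
      finally show ?thesis .
    qed
    moreover have "mu \<pi>0 s = 0 \<Longrightarrow> occ \<pi> s a - occ \<pi>' s a = 0" for s a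
      using mu_zero[OF that(1) p0(1)] mu_zero[OF that(2) p0(1)] by (simp add: occ_def)
    ultimately show ?thesis unfolding L0_def by auto
  qed
  have comb: "(\<lambda>s a. c * u s a + d * z s a) \<in> L0" if "u \<in> L0" "z \<in> L0" for u z c d
  proof -
    have "(\<Sum>a\<in>UNIV. c * u s' a + d * z s' a) = \<gamma> * (\<Sum>s\<in>UNIV. \<Sum>a\<in>UNIV. (c * u s a + d * z s a) * T s a s')" for s'
    proof -
      have "(\<Sum>a\<in>UNIV. c * u s' a + d * z s' a) = c * (\<Sum>a\<in>UNIV. u s' a) + d * (\<Sum>a\<in>UNIV. z s' a)"
        by (simp add: sum.distrib sum_distrib_left)
      also have "\<dots> = c * (\<gamma> * (\<Sum>s\<in>UNIV. \<Sum>a\<in>UNIV. u s a * T s a s')) + d * (\<gamma> * (\<Sum>s\<in>UNIV. \<Sum>a\<in>UNIV. z s a * T s a s'))"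
        using that unfolding L0_def by simp
      also have "\<dots> = \<gamma> * (\<Sum>s\<in>UNIV. \<Sum>a\<in>UNIV. (c * u s a + d * z s a) * T s a s')"
        by (simp add: sum.distrib sum_distrib_left algebra_simps)
      finally show ?thesis .
    qed
    then show ?thesis using that unfolding L0_def by auto
  qed
  have key: "\<not>(lin R v > 0 \<and> lin R' v < 0) \<and> \<not>(lin R v < 0 \<and> lin R' v > 0)" if vL: "v \<in> L0" for v
  proof -
    obtain p where tp: "(p \<longlongrightarrow> \<pi>0) (at_right 0)"
      and evp: "eventually (\<lambda>\<epsilon>. p \<epsilon> \<in> pos_policies \<and> occ (p \<epsilon>) = (\<lambda>s a. occ \<pi>0 s a + \<epsilon> * v s a)) (at_right 0)"
      using perturb[OF p0(1), of v] vL unfolding L0_def by auto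
    have "eventually (\<lambda>\<epsilon>. p \<epsilon> \<in> S) (at_right (0::real))"
      using topological_tendstoD[OF tp S(1) p0(2)] .
    then have "eventually (\<lambda>\<epsilon>. \<epsilon> > 0 \<and> p \<epsilon> \<in> S \<and> p \<epsilon> \<in> pos_policies \<and> occ (p \<epsilon>) = (\<lambda>s a. occ \<pi>0 s a + \<epsilon> * v s a)) (at_right (0::real))"
      using evp eventually_at_right_less[of "0::real"] by eventually_elim blast
    then have "\<exists>\<epsilon>::real. \<epsilon> > 0 \<and> p \<epsilon> \<in> S \<and> p \<epsilon> \<in> pos_policies \<and> occ (p \<epsilon>) = (\<lambda>s a. occ \<pi>0 s a + \<epsilon> * v s a)"
      by (rule eventually_happens'[OF trivial_limit_at_right_real])
    then obtain \<epsilon> :: real where \<epsilon>: "\<epsilon> > 0" "p \<epsilon> \<in> S" "p \<epsilon> \<in> pos_policies" "occ (p \<epsilon>) = (\<lambda>s a. occ \<pi>0 s a + \<epsilon> * v s a)"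
      by (elim exE conjE)
    have pU: "p \<epsilon> \<in> Pol" using \<epsilon> S U(2) by auto
    have ppol: "p \<epsilon> \<in> policies" using \<epsilon>(3) by (auto simp: pos_policies_def)
    have Jp: "J T d0 \<gamma> Q (p \<epsilon>) = J T d0 \<gamma> Q \<pi>0 + \<epsilon> * lin Q v" for Q
    proof -
      have "J T d0 \<gamma> Q (p \<epsilon>) = lin Q (\<lambda>s a. 1 * occ \<pi>0 s a + \<epsilon> * v s a)"
        using Jlin[OF ppol] \<epsilon>(4) by simp
      then show ?thesis unfolding lin_comb using Jlin[OF p0pol] by simp
    qed
    have pi0U: "\<pi>0 \<in> Pol" using \<pi>0 U(2) by auto
    show ?thesis
    proof (intro conjI notI)
      assume "lin R v > 0 \<and> lin R' v < 0"
      then have "J T d0 \<gamma> R (p \<epsilon>) > J T d0 \<gamma> R \<pi>0 \<and> J T d0 \<gamma> R' \<pi>0 > J T d0 \<gamma> R' (p \<epsilon>)"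
        using Jp \<epsilon>(1) by (simp add: mult_pos_neg)
      then show False using nh pU pi0U unfolding hackable_def by blast
    next
      assume "lin R v < 0 \<and> lin R' v > 0"
      then have "J T d0 \<gamma> R \<pi>0 > J T d0 \<gamma> R (p \<epsilon>) \<and> J T d0 \<gamma> R' (p \<epsilon>) > J T d0 \<gamma> R' \<pi>0"
        using Jp \<epsilon>(1) by (simp add: mult_pos_neg)
      then show False using nh pU pi0U unfolding hackable_def by blast
    qed
  qed
  have lindiff: "lin Q (\<lambda>s a. occ p s a - occ q s a) = J T d0 \<gamma> Q p - J T d0 \<gamma> Q q"
    if "p \<in> Pol" "q \<in> Pol" for p q Q
  proof -
    have "p \<in> policies" "q \<in> policies" using that stat by auto
    then show ?thesis by (simp add: lin_diff Jlin)
  qed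
  obtain p1 q1 where pq1: "p1 \<in> Pol" "q1 \<in> Pol" "J T d0 \<gamma> R p1 \<noteq> J T d0 \<gamma> R q1"
    using nontriv1 unfolding trivial_on_def by blast
  obtain p2 q2 where pq2: "p2 \<in> Pol" "q2 \<in> Pol" "J T d0 \<gamma> R' p2 \<noteq> J T d0 \<gamma> R' q2"
    using nontriv2 unfolding trivial_on_def by blast
  obtain p q where pq: "p \<in> Pol" "q \<in> Pol"
    "\<not> (J T d0 \<gamma> R p \<ge> J T d0 \<gamma> R q \<longleftrightarrow> J T d0 \<gamma> R' p \<ge> J T d0 \<gamma> R' q)"
    using noneq unfolding equivalent_on_def by blast
  define w1 where "w1 = (\<lambda>s a. occ p1 s a - occ q1 s a)"
  define w2 where "w2 = (\<lambda>s a. occ p2 s a - occ q2 s a)"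
  define z where "z = (\<lambda>s a. occ p s a - occ q s a)"
  have w1: "w1 \<in> L0" "lin R w1 \<noteq> 0" unfolding w1_def using diffL0 pq1 stat lindiff[OF pq1(1,2)] by auto
  have w2: "w2 \<in> L0" "lin R' w2 \<noteq> 0" unfolding w2_def using diffL0 pq2 stat lindiff[OF pq2(1,2)] by auto
  have zL: "z \<in> L0" unfolding z_def using diffL0 pq stat by auto
  have zR: "lin R z = J T d0 \<gamma> R p - J T d0 \<gamma> R q" "lin R' z = J T d0 \<gamma> R' p - J T d0 \<gamma> R' q"
    unfolding z_def using lindiff[OF pq(1,2)] by auto
  show False
  proof (cases "J T d0 \<gamma> R p \<ge> J T d0 \<gamma> R q")
    case True
    then have c: "lin R z \<ge> 0" "lin R' z < 0" using pq(3) zR by auto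
    then have "lin R z = 0" using key[OF zL] by auto
    show False
      by (rule core[of L0 "lin R" "lin R'" w1 z, OF comb lin_comb lin_comb key w1 zL \<open>lin R z = 0\<close>])
         (use c in auto)
  next
    case False
    then have c: "lin R z < 0" "lin R' z \<ge> 0" using pq(3) zR by auto
    then have "lin R' z = 0" using key[OF zL] by auto
    show False
      by (rule core[of L0 "lin R'" "lin R" w2 z, OF comb lin_comb lin_comb _ w2 zL \<open>lin R' z = 0\<close>])
         (use c key in auto)
  qed
qed

end
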